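(* Fix a nonempty $A\subseteq S$ and $w\in A$, and let $E_0=\{\tau_{\mathcal E_N^w}=\tau_{\mathcal E_N(A)}\}$. Let $x,y\in S$ be distinct with $r(x,y)=r(y,x)>0$. Then, as $N\to\infty$, $$\Big|\mathbb P_{\zeta_1^{x,y}}[E_0]-\frac{N-1}{N}\mathbb P_{\xi_N^x}[E_0]-\frac1N\mathbb P_{\xi_N^y}[E_0]\Big|=O(d_N\log N).$$
   Context: $S$ is finite; $r:S\times S\to[0,\infty)$, $r(x,x)=0$, are the rates of an irreducible continuous-time Markov chain on $S$. $\mathcal H_N=\{\eta\in\{0,1,2,\dots\}^S:\sum_x\eta_x=N\}$; $\sigma^{x,y}\eta$ moves one particle from $x$ to $y$ (if $\eta_x\ge1$; else $\sigma^{x,y}\eta=\eta$). With $d_N>0$, $d_N\to0$, the inclusion process is the Markov chain on $\mathcal H_N$ with generator $(\mathcal L_NF)(\eta)=\sum_{x\ne y}\eta_x(d_N+\eta_y)r(x,y)\{F(\sigma^{x,y}\eta)-F(\eta)\}$; $\mathbb P_\eta$ its law from $\eta$; $\tau_{\mathcal C}$ the hitting time of $\mathcal C\subseteq\mathcal H_N$. $\xi_N^z$: all $N$ particles at $z$; $\mathcal E_N^z=\{\xi_N^z\}$, $\mathcal E_N(A)=\bigcup_{z\in A}\mathcal E_N^z$. For $0\le i\le N$, $\zeta_i^{x,y}$ is the configuration with $N-i$ particles at $x$, $i$ at $y$, none elsewhere. $O(\cdot)$ has constant independent of $N$. *)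

theory Defs
  imports "HOL-Analysis.Analysis" "HOL-Library.Landau_Symbols"
begin

text \<open>Configurations of particles on the finite site set (a finite type 's) are
functions 's \<Rightarrow> nat; the process started in H_N stays in H_N.\<close>

definition move :: "'s \<Rightarrow> 's \<Rightarrow> ('s \<Rightarrow> nat) \<Rightarrow> ('s \<Rightarrow> nat)" where
  "move x y \<eta> = (if 1 \<le> \<eta> x then \<eta>(x := \<eta> x - 1, y := \<eta> y + 1) else \<eta>)"

definition xi :: "nat \<Rightarrow> 's \<Rightarrow> ('s \<Rightarrow> nat)" where
  "xi N z = (\<lambda>v. if v = z then N else 0)"

definition zeta :: "nat \<Rightarrow> nat \<Rightarrow> 's \<Rightarrow> 's \<Rightarrow> ('s \<Rightarrow> nat)" where
  "zeta N i x y = (\<lambda>v. if v = x then N - i else if v = y then i else 0)"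

definition condensate :: "nat \<Rightarrow> 's set \<Rightarrow> ('s \<Rightarrow> nat) set" where
  "condensate N A = (\<Union>z\<in>A. {xi N z})"

definition incl_rate :: "(nat \<Rightarrow> real) \<Rightarrow> ('s \<Rightarrow> 's \<Rightarrow> real) \<Rightarrow> nat \<Rightarrow> ('s \<Rightarrow> nat) \<Rightarrow> 's \<Rightarrow> 's \<Rightarrow> real" where
  "incl_rate d r N \<eta> x y = (if x = y then 0 else real (\<eta> x) * (d N + real (\<eta> y)) * r x y)"

definition incl_total_rate :: "(nat \<Rightarrow> real) \<Rightarrow> ('s::finite \<Rightarrow> 's \<Rightarrow> real) \<Rightarrow> nat \<Rightarrow> ('s \<Rightarrow> nat) \<Rightarrow> real" where
  "incl_total_rate d r N \<eta> = (\<Sum>x\<in>UNIV. \<Sum>y\<in>UNIV. incl_rate d r N \<eta> x y)"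

text \<open>hit_prob_upto d r N C B n eta: probability, for the jump chain of the inclusion process
started at eta, that the set C is hit within the first n jumps and that the state at the
hitting time tau_C lies in B.\<close>
fun hit_prob_upto :: "(nat \<Rightarrow> real) \<Rightarrow> ('s::finite \<Rightarrow> 's \<Rightarrow> real) \<Rightarrow> nat \<Rightarrow> ('s \<Rightarrow> nat) set
    \<Rightarrow> ('s \<Rightarrow> nat) set \<Rightarrow> nat \<Rightarrow> ('s \<Rightarrow> nat) \<Rightarrow> real" where
  "hit_prob_upto d r N C B 0 \<eta> = (if \<eta> \<in> C \<and> \<eta> \<in> B then 1 else 0)"
| "hit_prob_upto d r N C B (Suc n) \<eta> =
     (if \<eta> \<in> C then (if \<eta> \<in> B then 1 else 0)
      else (\<Sum>x\<in>UNIV. \<Sum>y\<in>UNIV.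
              incl_rate d r N \<eta> x y / incl_total_rate d r N \<eta> * hit_prob_upto d r N C B n (move x y \<eta>)))"

text \<open>P_eta[ tau_C < \<infinity> and X(tau_C) \<in> B ] for the inclusion process (the event only
depends on the embedded jump chain).\<close>
definition hit_prob :: "(nat \<Rightarrow> real) \<Rightarrow> ('s::finite \<Rightarrow> 's \<Rightarrow> real) \<Rightarrow> nat \<Rightarrow> ('s \<Rightarrow> nat) set
    \<Rightarrow> ('s \<Rightarrow> nat) set \<Rightarrow> ('s \<Rightarrow> nat) \<Rightarrow> real" where
  "hit_prob d r N C B \<eta> = (SUP n. hit_prob_upto d r N C B n \<eta>)"

text \<open>P_eta[E_0] with E_0 = {tau_{E_N^w} = tau_{E_N(A)}}: E_N(A) is hit (a.s. finite time)
and it is hit at xi_N^w.\<close>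
definition E0_prob :: "(nat \<Rightarrow> real) \<Rightarrow> ('s::finite \<Rightarrow> 's \<Rightarrow> real) \<Rightarrow> nat \<Rightarrow> 's set \<Rightarrow> 's
    \<Rightarrow> ('s \<Rightarrow> nat) \<Rightarrow> real" where
  "E0_prob d r N A w \<eta> = hit_prob d r N (condensate N A) {xi N w} \<eta>"

end

theory Submission
  imports Defs
begin


lemma rate_nonneg:
  assumes "\<And>a b. r a b \<ge> 0" "d N \<ge> 0"
  shows "incl_rate d r N \<eta> x y \<ge> 0"
  using assms by (auto simp: incl_rate_def)

lemma total_nonneg:
  assumes "\<And>a b. r a b \<ge> 0" "d N \<ge> 0"
  shows "incl_total_rate d r N \<eta> \<ge> 0"
  unfolding incl_total_rate_def by (intro sum_nonneg) (simp add: rate_nonneg[where r=r and d=d and N=N, OF assms])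

lemma weights_sum_le1:
  assumes "\<And>a b. r a b \<ge> 0" "d N \<ge> 0"
  shows "(\<Sum>x\<in>UNIV. \<Sum>y\<in>UNIV. incl_rate d r N \<eta> x y / incl_total_rate d r N \<eta>) \<le> 1"
proof -
  have "(\<Sum>x\<in>UNIV. \<Sum>y\<in>UNIV. incl_rate d r N \<eta> x y / incl_total_rate d r N \<eta>)
     = incl_total_rate d r N \<eta> / incl_total_rate d r N \<eta>"
    by (simp add: incl_total_rate_def sum_divide_distrib[symmetric])
  also have "\<dots> \<le> 1" by (cases "incl_total_rate d r N \<eta> = 0") auto
  finally show ?thesis .
qed

lemma upto_bounds:
  assumes "\<And>a b. r a b \<ge> 0" "d N \<ge> 0"
  shows "0 \<le> hit_prob_upto d r N C B n \<eta> \<and> hit_prob_upto d r N C B n \<eta> \<le> 1"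
proof (induction n arbitrary: \<eta>)
  case 0 then show ?case by simp
next
  case (Suc n)
  let ?w = "\<lambda>x y. incl_rate d r N \<eta> x y / incl_total_rate d r N \<eta>"
  have w0: "?w x y \<ge> 0" for x y
    by (intro divide_nonneg_nonneg rate_nonneg[where r=r and d=d and N=N, OF assms] total_nonneg[where r=r and d=d and N=N, OF assms])
  have "(\<Sum>x\<in>UNIV. \<Sum>y\<in>UNIV. ?w x y * hit_prob_upto d r N C B n (move x y \<eta>)) \<ge> 0"
    using Suc w0 by (intro sum_nonneg mult_nonneg_nonneg) auto
  moreover have "(\<Sum>x\<in>UNIV. \<Sum>y\<in>UNIV. ?w x y * hit_prob_upto d r N C B n (move x y \<eta>))
     \<le> (\<Sum>x\<in>UNIV. \<Sum>y\<in>UNIV. ?w x y)"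
    using Suc w0 by (intro sum_mono mult_left_le) auto
  moreover have "(\<Sum>x\<in>UNIV. \<Sum>y\<in>UNIV. ?w x y) \<le> 1" by (rule weights_sum_le1[where r=r and d=d and N=N, OF assms])
  ultimately show ?case by (simp only: hit_prob_upto.simps) (auto simp del: hit_prob_upto.simps)
qed

lemma upto_mono:
  assumes "\<And>a b. r a b \<ge> 0" "d N \<ge> 0"
  shows "hit_prob_upto d r N C B n \<eta> \<le> hit_prob_upto d r N C B (Suc n) \<eta>"
proof (induction n arbitrary: \<eta>)
  case 0
  show ?case
  proof (cases "\<eta> \<in> C")
    case False
    have "0 \<le> hit_prob_upto d r N C B (Suc 0) \<eta>" using upto_bounds[where r=r and d=d and N=N, OF assms] by blast
    with False show ?thesis by simp
  qed simp
next
  case (Suc n)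
  let ?w = "\<lambda>x y. incl_rate d r N \<eta> x y / incl_total_rate d r N \<eta>"
  have w0: "?w x y \<ge> 0" for x y
    by (intro divide_nonneg_nonneg rate_nonneg[where r=r and d=d and N=N, OF assms] total_nonneg[where r=r and d=d and N=N, OF assms])
  have "(\<Sum>x\<in>UNIV. \<Sum>y\<in>UNIV. ?w x y * hit_prob_upto d r N C B n (move x y \<eta>))
     \<le> (\<Sum>x\<in>UNIV. \<Sum>y\<in>UNIV. ?w x y * hit_prob_upto d r N C B (Suc n) (move x y \<eta>))"
    using Suc w0 by (intro sum_mono mult_left_mono) auto
  then show ?case by (simp only: hit_prob_upto.simps(2)) (auto simp del: hit_prob_upto.simps)
qed

lemma upto_lim:
  assumes "\<And>a b. r a b \<ge> 0" "d N \<ge> 0"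
  shows "(\<lambda>n. hit_prob_upto d r N C B n \<eta>) \<longlonglongrightarrow> hit_prob d r N C B \<eta>"
  unfolding hit_prob_def
  by (rule LIMSEQ_incseq_SUP) (use upto_bounds[where r=r and d=d and N=N, OF assms] upto_mono[where r=r and d=d and N=N, OF assms] in \<open>auto intro!: incseq_SucI bdd_aboveI\<close>)

lemma hit_bounds:
  assumes "\<And>a b. r a b \<ge> 0" "d N \<ge> 0"
  shows "0 \<le> hit_prob d r N C B \<eta> \<and> hit_prob d r N C B \<eta> \<le> 1"
  using upto_lim[where r=r and d=d and N=N, OF assms] upto_bounds[where r=r and d=d and N=N, OF assms]
  by (meson LIMSEQ_le_const LIMSEQ_le_const2)

lemma hit_harm:
  assumes "\<And>a b. r a b \<ge> 0" "d N \<ge> 0" "\<eta> \<notin> C"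
  shows "hit_prob d r N C B \<eta> = (\<Sum>x\<in>UNIV. \<Sum>y\<in>UNIV.
              incl_rate d r N \<eta> x y / incl_total_rate d r N \<eta> * hit_prob d r N C B (move x y \<eta>))"
proof -
  let ?w = "\<lambda>x y. incl_rate d r N \<eta> x y / incl_total_rate d r N \<eta>"
  have eq: "hit_prob_upto d r N C B (Suc n) \<eta> = (\<Sum>x\<in>UNIV. \<Sum>y\<in>UNIV.
              ?w x y * hit_prob_upto d r N C B n (move x y \<eta>))" for n
    using assms(3) by (simp only: hit_prob_upto.simps(2) if_False)
  have L: "\<And>x y. (\<lambda>n. hit_prob_upto d r N C B n (move x y \<eta>)) \<longlonglongrightarrow> hit_prob d r N C B (move x y \<eta>)"
    by (rule upto_lim[where r=r and d=d and N=N, OF assms(1,2)])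
  have "(\<lambda>n. \<Sum>x\<in>UNIV. \<Sum>y\<in>UNIV. ?w x y * hit_prob_upto d r N C B n (move x y \<eta>)) \<longlonglongrightarrow> (\<Sum>x\<in>UNIV. \<Sum>y\<in>UNIV.
              ?w x y * hit_prob d r N C B (move x y \<eta>))"
    apply (rule tendsto_sum)
    apply (rule tendsto_sum)
    apply (rule tendsto_mult_left)
    apply (rule L)
    done
  then have "(\<lambda>n. hit_prob_upto d r N C B (Suc n) \<eta>) \<longlonglongrightarrow> (\<Sum>x\<in>UNIV. \<Sum>y\<in>UNIV.
              ?w x y * hit_prob d r N C B (move x y \<eta>))"
    by (simp only: eq)
  moreover have "(\<lambda>n. hit_prob_upto d r N C B (Suc n) \<eta>) \<longlonglongrightarrow> hit_prob d r N C B \<eta>"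
    using upto_lim[where r=r and d=d and N=N, OF assms(1,2)] by (rule LIMSEQ_Suc)
  ultimately show ?thesis by (rule LIMSEQ_unique[rotated])
qed

lemma hit_in:
  assumes "\<eta> \<in> C"
  shows "hit_prob d r N C B \<eta> = (if \<eta> \<in> B then 1 else 0)"
proof -
  have "hit_prob_upto d r N C B n \<eta> = (if \<eta> \<in> B then 1 else 0)" for n
    using assms by (cases n) auto
  then show ?thesis unfolding hit_prob_def by simp
qed



lemma maxprin:
  fixes u a b T :: "nat \<Rightarrow> real"
  assumes eq: "\<And>k. 0<k \<Longrightarrow> k<N \<Longrightarrow> T k * u k \<le> a k * u (k+1) + b k * u (k-1)"
   and apos: "\<And>k. 0<k \<Longrightarrow> k<N \<Longrightarrow> a k > 0"
   and bnn: "\<And>k. 0<k \<Longrightarrow> k<N \<Longrightarrow> b k \<ge> 0"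
   and T: "\<And>k. 0<k \<Longrightarrow> k<N \<Longrightarrow> T k \<ge> a k + b k"
   and u0: "u 0 \<le> 0" and uN: "u N \<le> 0" and kN: "k \<le> N"
  shows "u k \<le> 0"
proof (rule ccontr)
  assume "\<not> u k \<le> 0"
  define M where "M = Max (u ` {0..N})"
  have fin: "finite (u ` {0..N})" by simp
  have uleM: "u j \<le> M" if "j \<le> N" for j unfolding M_def using that by (intro Max_ge) auto
  have "u k \<le> M" using uleM kN .
  with \<open>\<not> u k \<le> 0\<close> have Mpos: "M > 0" by linarith
  have "M \<in> u ` {0..N}" unfolding M_def by (rule Max_in) auto
  then obtain j0 where j0: "j0 \<le> N" "u j0 = M" by auto
  define S where "S = {j. j \<le> N \<and> u j = M}"
  have finS: "finite S" unfolding S_def by simp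
  have "j0 \<in> S" using j0 unfolding S_def by simp
  define m where "m = Max S"
  have "m \<in> S" unfolding m_def using finS \<open>j0 \<in> S\<close> by (intro Max_in) auto
  then have m: "m \<le> N" "u m = M" unfolding S_def by auto
  have mmax: "j \<le> m" if "j \<le> N" "u j = M" for j
    unfolding m_def using finS that by (intro Max_ge) (auto simp: S_def)
  have "m \<noteq> 0"
  proof
    assume "m = 0" with m u0 Mpos show False by simp
  qed
  moreover have "m \<noteq> N" using m uN Mpos by auto
  ultimately have m0: "0 < m" "m < N" using m by auto
  have "u (m+1) \<le> M" using uleM m0 by simp
  moreover have "u (m+1) \<noteq> M" using mmax[of "m+1"] m0 by auto
  ultimately have lt: "u (m+1) < M" by simp
  have le: "u (m-1) \<le> M" using uleM m0 by simp
  have "T m * M \<le> a m * u (m+1) + b m * u (m-1)" using eq[OF m0] m by simp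
  also have "\<dots> < a m * M + b m * M"
    using mult_strict_left_mono[OF lt apos[OF m0]] mult_left_mono[OF le bnn[OF m0]] by linarith
  also have "\<dots> \<le> T m * M" using T[OF m0] Mpos by (simp add: distrib_right[symmetric])
  finally show False by simp
qed

definition FF :: "nat \<Rightarrow> nat \<Rightarrow> real" where
  "FF N j = real j * (harm N - harm j)"

lemma FF_0: "FF N 0 = 0" by (simp add: FF_def harm_def)
lemma FF_N: "FF N N = 0" by (simp add: FF_def)

lemma alg1:
  fixes x p q :: real assumes "x \<ge> 0"
  shows "(x+2) * (p - (q + inverse (x+1) + inverse (x+2))) - 2 * ((x+1) * (p - (q + inverse (x+1)))) + x * (p - q) = - 1 / (x+1)"
proof -
  have a: "x+1 \<noteq> 0" "x+2 \<noteq> 0" using assms by linarith+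
  have "(x+2) * (p - (q + inverse (x+1) + inverse (x+2))) - 2 * ((x+1) * (p - (q + inverse (x+1)))) + x * (p - q)
     = ((x+2) - 2*(x+1) + x) * (p - q) - (x+2) * inverse (x+1) - (x+2) * inverse (x+2) + 2 * ((x+1) * inverse (x+1))"
    by (simp add: algebra_simps)
  also have "\<dots> = 1 - (x+2) / (x+1)" using a by (simp add: divide_inverse)
  also have "\<dots> = - 1 / (x+1)" using a by (simp add: field_simps)
  finally show ?thesis .
qed

lemma FF_delta: "FF N (Suc (Suc k)) - 2 * FF N (Suc k) + FF N k = - 1 / real (Suc k)"
  unfolding FF_def harm_Suc using alg1[of "real k" "harm N" "harm k"]
  by (simp add: of_nat_Suc add_ac)

lemma FF_slope:
  assumes "Suc j \<le> N"
  shows "FF N (Suc j) - FF N j \<le> harm N" "FF N (Suc j) - FF N j \<ge> -1"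
proof -
  have eq: "FF N (Suc j) - FF N j = harm N - harm (Suc j) - real j / real (Suc j)"
  proof -
    have "real (Suc j) * (harm N - (harm j + inverse (real (Suc j)))) - real j * (harm N - harm j)
      = harm N - (harm j + inverse (real (Suc j))) - real j * inverse (real (Suc j))"
      by (simp add: algebra_simps of_nat_Suc)
    also have "real j * inverse (real (Suc j)) = real j / real (Suc j)" by (simp add: divide_inverse)
    finally show ?thesis unfolding FF_def harm_Suc by simp
  qed
  have h: "harm (Suc j) \<le> (harm N :: real)" using assms by (rule harm_mono)
  have "(0::real) \<le> harm (Suc j)" by (rule harm_nonneg)
  moreover have "real j / real (Suc j) \<ge> 0" by simp
  moreover have "real j / real (Suc j) \<le> 1" by simp
  ultimately show "FF N (Suc j) - FF N j \<le> harm N" "FF N (Suc j) - FF N j \<ge> -1"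
    using eq h by linarith+
qed

lemma FF_nonneg: "j \<le> N \<Longrightarrow> FF N j \<ge> 0"
  unfolding FF_def using harm_mono[of j N] by (intro mult_nonneg_nonneg) auto

definition PS :: "nat \<Rightarrow> nat \<Rightarrow> real" where
  "PS N k = FF N k + FF N (N - k)"

lemma PS_0: "PS N 0 = 0" and PS_N: "PS N N = 0"
  by (simp_all add: PS_def FF_0 FF_N)

lemma PS_nonneg: "k \<le> N \<Longrightarrow> PS N k \<ge> 0"
  unfolding PS_def by (intro add_nonneg_nonneg FF_nonneg) auto

lemma PS_1: assumes "N \<ge> 1" shows "PS N 1 \<le> harm N"
proof -
  obtain M where M: "N = Suc M" using assms by (cases N) auto
  have "PS N 1 = harm N - 1 + real M * (harm N - harm M)"
    unfolding PS_def FF_def M by (simp add: harm_def)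
  also have "harm N - harm M = 1 / real N" unfolding M harm_Suc by (simp add: field_simps)
  finally have "PS N 1 = harm N - 1 + real M / real N" by simp
  moreover have "real M / real N \<le> 1" using M by simp
  ultimately show ?thesis by linarith
qed

lemma PS_delta:
  assumes "0 < k" "k < N"
  shows "PS N (k+1) - 2 * PS N k + PS N (k-1) = - 1 / real k - 1 / real (N - k)"
proof -
  obtain k' where k': "k = Suc k'" using assms by (cases k) auto
  obtain j where j: "N - k = Suc j" using assms by (cases "N - k") auto
  have e1: "N - (k+1) = j" and e2: "N - (k - 1) = Suc (Suc j)" using j assms by auto
  have A: "FF N (k+1) - 2 * FF N k + FF N (k-1) = - 1 / real k"
    using FF_delta[of N k'] k' by simp
  have B: "FF N (N - (k+1)) - 2 * FF N (N-k) + FF N (N - (k-1)) = - 1 / real (N - k)"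
    using FF_delta[of N j] unfolding e1 e2 j by simp
  show ?thesis using A B unfolding PS_def by simp
qed

lemma PS_slope:
  assumes "k < N"
  shows "\<bar>PS N (k+1) - PS N k\<bar> \<le> harm N + 1"
proof -
  obtain j where j: "N - k = Suc j" using assms by (cases "N - k") auto
  have e1: "N - (k+1) = j" using j by auto
  have a1: "FF N (Suc k) - FF N k \<le> harm N" "FF N (Suc k) - FF N k \<ge> -1"
    using FF_slope[of k N] assms by auto
  have a2: "FF N (Suc j) - FF N j \<le> harm N" "FF N (Suc j) - FF N j \<ge> -1"
    using FF_slope[of j N] j by auto
  show ?thesis unfolding PS_def e1 j using a1 a2 by (simp add: abs_le_iff)
qed



lemma discrete:
  fixes h e c :: "nat \<Rightarrow> real" and N :: nat and d q K :: real
  assumes N2: "N \<ge> 2" and d: "d > 0" and q: "q > 0" and K: "K \<ge> 0"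
  and hb: "\<And>k. k \<le> N \<Longrightarrow> 0 \<le> h k \<and> h k \<le> 1"
  and ec: "\<And>k. 0<k \<Longrightarrow> k<N \<Longrightarrow> 0 \<le> e k \<and> e k \<le> c k"
  and cK: "\<And>k. 0<k \<Longrightarrow> k<N \<Longrightarrow> c k \<le> real N * d * K"
  and heq: "\<And>k. 0<k \<Longrightarrow> k<N \<Longrightarrow>
     (q * real (N-k) * (d + real k) + q * real k * (d + real (N-k)) + c k) * h k
       = q * real (N-k) * (d + real k) * h (k+1) + q * real k * (d + real (N-k)) * h (k-1) + e k"
  shows "\<bar>h 1 - real (N-1) / real N * h 0 - 1 / real N * h N\<bar> \<le> (2*(K+q)/q + 2) * d * (harm N + 1)"
proof -
  define a where "a k = q * real (N-k) * (d + real k)" for k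
  define b where "b k = q * real k * (d + real (N-k))" for k
  define T where "T k = a k + b k + c k" for k
  define H where "H = (harm N :: real)"
  define D where "D = (h N - h 0) / real N"
  define l where "l k = h 0 + D * real k" for k
  define f where "f k = h k - l k" for k
  have Npos: "real N > 0" using N2 by simp
  have H0: "H \<ge> 0" unfolding H_def by (rule harm_nonneg)
  have lN: "l N = h N" unfolding l_def D_def using Npos by simp
  have lb: "0 \<le> l k \<and> l k \<le> 1" if "k \<le> N" for k
  proof -
    have t: "0 \<le> real k / real N" "real k / real N \<le> 1" using that Npos by auto
    have "l k = h 0 * (1 - real k / real N) + h N * (real k / real N)"
      unfolding l_def D_def using Npos by (simp add: field_simps)
    moreover have "0 \<le> h 0 * (1 - real k / real N)" "0 \<le> h N * (real k / real N)"
      using hb[of 0] hb[of N] t by auto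
    moreover have "h 0 * (1 - real k / real N) \<le> 1 - real k / real N"
      "h N * (real k / real N) \<le> real k / real N"
      using hb[of 0] hb[of N] t by (auto intro: mult_left_le_one_le mult_left_le simp del: times_divide_eq_right)
    ultimately show ?thesis by linarith
  qed
  have goal_eq: "h 1 - real (N-1) / real N * h 0 - 1 / real N * h N = f 1"
    unfolding f_def l_def D_def using N2 Npos by (simp add: field_simps of_nat_diff)
  have f0: "f 0 = 0" and fN: "f N = 0" unfolding f_def using lN by (simp_all add: l_def)
  have f1b: "\<bar>f 1\<bar> \<le> 1" using hb[of 1] lb[of 1] N2 unfolding f_def by auto
  show ?thesis
  proof (cases "d * (H + 1) \<le> 1/2")
    case False
    have "\<bar>f 1\<bar> \<le> 2 * d * (H + 1)" using f1b False by linarith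
    also have "\<dots> \<le> (2*(K+q)/q + 2) * d * (H + 1)"
      using d H0 q K by (intro mult_right_mono) (auto simp: field_simps)
    finally show ?thesis unfolding goal_eq H_def .
  next
    case True
    define lam where "lam = 2 * d * (K + q) / q"
    have lam0: "lam \<ge> 0" unfolding lam_def using d q K by auto
    define phi where "phi k = lam * PS N k" for k
    have resid: "\<bar>T k * f k - a k * f (k+1) - b k * f (k-1)\<bar> \<le> real N * d * (K + q)"
      if k: "0 < k" "k < N" for k
    proof -
      have lk1: "l (k+1) = l k + D" "l (k-1) = l k - D"
        unfolding l_def using k by (simp_all add: algebra_simps of_nat_diff)
      have "T k * f k - a k * f (k+1) - b k * f (k-1)
          = (T k * h k - a k * h (k+1) - b k * h (k-1)) - (T k * l k - a k * l (k+1) - b k * l (k-1))"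
        unfolding f_def by (simp add: algebra_simps)
      also have "T k * h k - a k * h (k+1) - b k * h (k-1) = e k"
        using heq[OF k] unfolding T_def a_def b_def by simp
      also have "T k * l k - a k * l (k+1) - b k * l (k-1) = c k * l k - (a k - b k) * D"
        unfolding lk1 T_def by (simp add: algebra_simps)
      finally have eq: "T k * f k - a k * f (k+1) - b k * f (k-1) = (e k - c k * l k) + (a k - b k) * D"
        by simp
      have c0: "c k \<ge> 0" using ec[OF k] by linarith
      have "0 \<le> c k * l k" "c k * l k \<le> c k" using lb[of k] k c0 by (auto intro: mult_left_le)
      then have t1: "\<bar>e k - c k * l k\<bar> \<le> real N * d * K" using ec[OF k] cK[OF k] by linarith
      have ab: "a k - b k = q * d * (real N - 2 * real k)"
        unfolding a_def b_def using k by (simp add: algebra_simps of_nat_diff)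
      have absN: "\<bar>real N - 2 * real k\<bar> \<le> real N" using k by auto
      have absD: "\<bar>h N - h 0\<bar> \<le> 1" using hb[of N] hb[of 0] by auto
      have "\<bar>(a k - b k) * D\<bar> = q * d * (\<bar>real N - 2 * real k\<bar> * \<bar>h N - h 0\<bar> / real N)"
        unfolding ab D_def using q d Npos by (simp add: abs_mult)
      also have "\<bar>real N - 2 * real k\<bar> * \<bar>h N - h 0\<bar> / real N \<le> 1"
      proof -
        have "\<bar>real N - 2 * real k\<bar> * \<bar>h N - h 0\<bar> \<le> real N * 1"
          using absN absD by (intro mult_mono) auto
        then show ?thesis using Npos by (simp add: divide_le_eq_1)
      qed
      then have "q * d * (\<bar>real N - 2 * real k\<bar> * \<bar>h N - h 0\<bar> / real N) \<le> q * d * 1"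
        using q d by (intro mult_left_mono) auto
      finally have t2: "\<bar>(a k - b k) * D\<bar> \<le> q * d" by simp
      have "q * d \<le> real N * d * q" using N2 q d by simp
      then show ?thesis unfolding eq using t1 t2 by (simp add: algebra_simps)
    qed
    have super: "T k * phi k - a k * phi (k+1) - b k * phi (k-1) \<ge> real N * d * (K + q)"
      if k: "0 < k" "k < N" for k
    proof -
      define X where "X = phi k - phi (k+1)"
      define Y where "Y = phi k - phi (k-1)"
      have c0: "c k \<ge> 0" using ec[OF k] by linarith
      have "c k * phi k \<ge> 0" unfolding phi_def using c0 lam0 PS_nonneg[of k N] k by simp
      have split: "T k * phi k - a k * phi (k+1) - b k * phi (k-1) = c k * phi k + (a k * X + b k * Y)"
        unfolding T_def X_def Y_def by (simp add: algebra_simps)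
      have abXY: "a k * X + b k * Y = q * (real k * real (N-k)) * (X + Y) + q * d * (real (N-k) * X + real k * Y)"
        unfolding a_def b_def by (simp add: algebra_simps)
      have "X + Y = lam * (1 / real k + 1 / real (N-k))"
      proof -
        have "PS N k - PS N (k+1) + (PS N k - PS N (k-1)) = 1 / real k + 1 / real (N-k)"
        proof -
          have "PS N (k + 1) - 2 * PS N k + PS N (k - 1) = - (1 / real k) - 1 / real (N - k)"
            using PS_delta[OF k] by simp
          then show ?thesis by (simp add: algebra_simps)
        qed
        then show ?thesis unfolding X_def Y_def phi_def by (simp add: algebra_simps)
      qed
      moreover have "real k * real (N-k) * (1 / real k + 1 / real (N-k)) = real N"
        using k by (simp add: field_simps of_nat_diff)
      ultimately have XY: "real k * real (N-k) * (X + Y) = lam * real N"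
        by (metis mult.assoc mult.left_commute)
      have sX: "\<bar>X\<bar> \<le> lam * (H + 1)"
        unfolding X_def phi_def H_def using PS_slope[of k N] k lam0
        by (simp add: abs_minus_commute right_diff_distrib[symmetric] abs_mult mult_left_mono)
      have sY: "\<bar>Y\<bar> \<le> lam * (H + 1)"
      proof -
        have "\<bar>PS N (k - 1 + 1) - PS N (k-1)\<bar> \<le> harm N + 1" using PS_slope[of "k-1" N] k by simp
        then have "\<bar>PS N k - PS N (k-1)\<bar> \<le> H + 1" using k unfolding H_def by simp
        then show ?thesis unfolding Y_def phi_def using lam0
          by (simp add: right_diff_distrib[symmetric] abs_mult mult_left_mono)
      qed
      have "real (N-k) * X \<ge> - (real (N-k) * (lam * (H + 1)))"
      proof -
        have "- (lam * (H + 1)) \<le> X" using sX by (simp add: abs_le_iff)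
        then have "real (N-k) * (- (lam * (H + 1))) \<le> real (N-k) * X" by (intro mult_left_mono) auto
        then show ?thesis by simp
      qed
      moreover have "real k * Y \<ge> - (real k * (lam * (H + 1)))"
      proof -
        have "- (lam * (H + 1)) \<le> Y" using sY by (simp add: abs_le_iff)
        then have "real k * (- (lam * (H + 1))) \<le> real k * Y" by (intro mult_left_mono) auto
        then show ?thesis by simp
      qed
      ultimately have "real (N-k) * X + real k * Y \<ge> - (real N * (lam * (H + 1)))"
        using k by (simp add: of_nat_diff algebra_simps)
      then have "q * d * (real (N-k) * X + real k * Y) \<ge> q * d * (- (real N * (lam * (H + 1))))"
        using q d by (intro mult_left_mono) auto
      then have "a k * X + b k * Y \<ge> q * lam * real N - q * lam * real N * (d * (H + 1))"
        unfolding abXY using XY by (simp add: algebra_simps)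
      moreover have "q * lam * real N * (d * (H + 1)) \<le> q * lam * real N * (1/2)"
        using True q lam0 Npos by (intro mult_left_mono) auto
      moreover have "q * lam * real N * (1/2) = real N * d * (K + q)"
        unfolding lam_def using q by (simp add: field_simps)
      ultimately show ?thesis unfolding split using \<open>c k * phi k \<ge> 0\<close> by linarith
    qed
    have apos: "a k > 0" if "0 < k" "k < N" for k unfolding a_def using that q d by auto
    have bnn: "b k \<ge> 0" if "0 < k" "k < N" for k unfolding b_def using that q d by auto
    have Tab: "T k \<ge> a k + b k" if "0 < k" "k < N" for k unfolding T_def using ec[OF that] by auto
    have phi0: "phi 0 = 0" and phiN: "phi N = 0" unfolding phi_def by (simp_all add: PS_0 PS_N)
    have up: "f 1 - phi 1 \<le> 0"
    proof (rule maxprin[where u = "\<lambda>k. f k - phi k" and a = a and b = b and T = T and N = N])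
      fix k assume k: "0 < k" "k < N"
      show "T k * (f k - phi k) \<le> a k * (f (k+1) - phi (k+1)) + b k * (f (k-1) - phi (k-1))"
        using resid[OF k] super[OF k] by (simp add: algebra_simps abs_le_iff)
    qed (use apos bnn Tab f0 fN phi0 phiN N2 in auto)
    have lo: "- f 1 - phi 1 \<le> 0"
    proof (rule maxprin[where u = "\<lambda>k. - f k - phi k" and a = a and b = b and T = T and N = N])
      fix k assume k: "0 < k" "k < N"
      show "T k * (- f k - phi k) \<le> a k * (- f (k+1) - phi (k+1)) + b k * (- f (k-1) - phi (k-1))"
        using resid[OF k] super[OF k] by (simp add: algebra_simps abs_le_iff)
    qed (use apos bnn Tab f0 fN phi0 phiN N2 in auto)
    have "phi 1 \<le> lam * H" unfolding phi_def H_def using PS_1[of N] N2 lam0 by (simp add: mult_left_mono)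
    then have "\<bar>f 1\<bar> \<le> lam * H" using up lo by linarith
    also have "lam * H \<le> (2*(K+q)/q + 2) * d * (H + 1)"
    proof -
      have "lam * H = (2*(K+q)/q) * d * H" unfolding lam_def by simp
      also have "\<dots> \<le> (2*(K+q)/q + 2) * d * (H + 1)"
        using q K d H0 by (intro mult_mono) auto
      finally show ?thesis .
    qed
    finally show ?thesis unfolding goal_eq H_def .
  qed
qed



lemma zeta_0: "zeta N 0 x y = xi N x" by (auto simp: zeta_def xi_def)
lemma zeta_N: "x \<noteq> y \<Longrightarrow> zeta N N x y = xi N y" by (auto simp: zeta_def xi_def)

lemma move_xy: "x \<noteq> y \<Longrightarrow> k < N \<Longrightarrow> move x y (zeta N k x y) = zeta N (k+1) x y"
  by (auto simp: move_def zeta_def fun_eq_iff)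
lemma move_yx: "x \<noteq> y \<Longrightarrow> 0 < k \<Longrightarrow> k \<le> N \<Longrightarrow> move y x (zeta N k x y) = zeta N (k-1) x y"
  by (auto simp: move_def zeta_def fun_eq_iff)

lemma zeta_notin: "x \<noteq> y \<Longrightarrow> 0 < k \<Longrightarrow> k < N \<Longrightarrow> zeta N k x y \<notin> condensate N A"
proof
  assume a: "x \<noteq> y" "0 < k" "k < N" "zeta N k x y \<in> condensate N A"
  then obtain z where "zeta N k x y = xi N z" by (auto simp: condensate_def)
  then have "\<And>v. zeta N k x y v = xi N z v" by simp
  from this[of x] this[of y] a show False by (auto simp: zeta_def xi_def split: if_splits)
qed

lemma sum_pairs:
  fixes f :: "'s::finite \<Rightarrow> 's \<Rightarrow> real"
  assumes "x \<noteq> y"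
  shows "(\<Sum>u\<in>UNIV. \<Sum>v\<in>UNIV. f u v) = f x y + f y x + (\<Sum>p\<in>UNIV - {(x,y),(y,x)}. f (fst p) (snd p))"
proof -
  have "(\<Sum>u\<in>UNIV. \<Sum>v\<in>UNIV. f u v) = (\<Sum>p\<in>UNIV. f (fst p) (snd p))"
  proof -
    have "(\<Sum>u\<in>UNIV. \<Sum>v\<in>UNIV. f u v) = (\<Sum>(u,v)\<in>UNIV \<times> UNIV. f u v)"
      by (rule sum.cartesian_product)
    then show ?thesis by (simp add: case_prod_beta)
  qed
  also have "\<dots> = (\<Sum>p\<in>{(x,y),(y,x)}. f (fst p) (snd p)) + (\<Sum>p\<in>UNIV - {(x,y),(y,x)}. f (fst p) (snd p))"
    using sum.subset_diff[of "{(x,y),(y,x)}" UNIV "\<lambda>p. f (fst p) (snd p)"] by (simp add: add.commute)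
  also have "(\<Sum>p\<in>{(x,y),(y,x)}. f (fst p) (snd p)) = f x y + f y x" using assms by simp
  finally show ?thesis .
qed

lemma other_rate_le:
  assumes r0: "\<And>a b. r a b \<ge> 0" and d0: "d N \<ge> 0" and xy: "x \<noteq> y" and k: "k \<le> N"
    and p: "p \<notin> {(x,y),(y,x)}"
  shows "incl_rate d r N (zeta N k x y) (fst p) (snd p) \<le> real N * d N * r (fst p) (snd p)"
proof -
  obtain u v where p': "p = (u, v)" by (cases p)
  let ?z = "zeta N k x y"
  have zle: "real (?z t) \<le> real N" for t using k by (auto simp: zeta_def)
  show ?thesis
  proof (cases "u = v")
    case True then show ?thesis using r0 d0 p' by (simp add: incl_rate_def)
  next
    case uv: False
    have rate: "incl_rate d r N ?z u v = real (?z u) * (d N + real (?z v)) * r u v"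
      using uv by (simp add: incl_rate_def)
    have "?z u = 0 \<or> ?z v = 0"
      using p p' uv by (auto simp: zeta_def split: if_splits)
    then show ?thesis
    proof
      assume "?z u = 0" then show ?thesis using rate p' r0 d0 by (simp add: mult_nonneg_nonneg)
    next
      assume "?z v = 0"
      then have "incl_rate d r N ?z u v = real (?z u) * (d N * r u v)" using rate by simp
      also have "\<dots> \<le> real N * (d N * r u v)"
        using zle[of u] r0 d0 by (intro mult_right_mono) auto
      finally show ?thesis using p' by simp
    qed
  qed
qed



lemma main_bound:
  fixes r :: "'s::finite \<Rightarrow> 's \<Rightarrow> real" and d :: "nat \<Rightarrow> real"
    and A :: "'s set" and w x y :: 's
  assumes r_nonneg: "\<And>a b. r a b \<ge> 0"
    and d_pos: "\<And>N. d N > 0"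
    and xy: "x \<noteq> y" and r_sym: "r x y = r y x" and r_pos: "r x y > 0"
    and N2: "N \<ge> 2"
  shows "\<bar>E0_prob d r N A w (zeta N 1 x y)
                 - real (N - 1) / real N * E0_prob d r N A w (xi N x)
                 - 1 / real N * E0_prob d r N A w (xi N y)\<bar>
     \<le> (2 * ((\<Sum>p\<in>UNIV. r (fst p) (snd p)) + r x y) / r x y + 2) * d N * (harm N + 1)"
proof -
  define K where "K = (\<Sum>p\<in>UNIV. r (fst p) (snd p))"
  define q where "q = r x y"
  define C where "C = condensate N A"
  define B where "B = {xi N w}"
  define hp where "hp = hit_prob d r N C B"
  define h where "h k = hp (zeta N k x y)" for k
  define Oth where "Oth = UNIV - {(x,y),(y,x)}"
  define c where "c k = (\<Sum>p\<in>Oth. incl_rate d r N (zeta N k x y) (fst p) (snd p))" for k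
  define e where "e k = (\<Sum>p\<in>Oth. incl_rate d r N (zeta N k x y) (fst p) (snd p)
        * hp (move (fst p) (snd p) (zeta N k x y)))" for k
  have d0: "d N \<ge> 0" using d_pos[of N] by simp
  have E0: "E0_prob d r N A w = hp" unfolding hp_def C_def B_def by (simp add: fun_eq_iff E0_prob_def)
  have hpb: "0 \<le> hp \<eta> \<and> hp \<eta> \<le> 1" for \<eta>
    unfolding hp_def by (rule hit_bounds[where r=r and d=d and N=N, OF r_nonneg d0])
  have K0: "K \<ge> 0" unfolding K_def using r_nonneg by (intro sum_nonneg) auto
  have hb: "0 \<le> h k \<and> h k \<le> 1" if "k \<le> N" for k unfolding h_def by (rule hpb)
  have rate_nn: "incl_rate d r N \<eta> u v \<ge> 0" for \<eta> u v
    by (rule rate_nonneg[where r=r and d=d and N=N, OF r_nonneg d0])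
  have ec: "0 \<le> e k \<and> e k \<le> c k" if "0<k" "k<N" for k
  proof
    show "0 \<le> e k" unfolding e_def using rate_nn hpb by (intro sum_nonneg mult_nonneg_nonneg) auto
    show "e k \<le> c k" unfolding e_def c_def using rate_nn hpb by (intro sum_mono mult_right_le_one_le) auto
  qed
  have cK: "c k \<le> real N * d N * K" if "0<k" "k<N" for k
  proof -
    have "c k \<le> (\<Sum>p\<in>Oth. real N * d N * r (fst p) (snd p))"
      unfolding c_def Oth_def using that
      by (intro sum_mono other_rate_le[where r=r and d=d and N=N, OF r_nonneg d0 xy]) auto
    also have "\<dots> = real N * d N * (\<Sum>p\<in>Oth. r (fst p) (snd p))" by (simp add: sum_distrib_left)
    also have "(\<Sum>p\<in>Oth. r (fst p) (snd p)) \<le> K"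
      unfolding K_def Oth_def using r_nonneg by (intro sum_mono2) auto
    then have "real N * d N * (\<Sum>p\<in>Oth. r (fst p) (snd p)) \<le> real N * d N * K"
      using d0 by (intro mult_left_mono) auto
    finally show ?thesis .
  qed
  have heq: "(q * real (N-k) * (d N + real k) + q * real k * (d N + real (N-k)) + c k) * h k
       = q * real (N-k) * (d N + real k) * h (k+1) + q * real k * (d N + real (N-k)) * h (k-1) + e k"
    if k: "0<k" "k<N" for k
  proof -
    let ?z = "zeta N k x y"
    let ?T = "incl_total_rate d r N ?z"
    have ra: "incl_rate d r N ?z x y = q * real (N-k) * (d N + real k)"
      using xy k unfolding q_def by (simp add: incl_rate_def zeta_def)
    have rb: "incl_rate d r N ?z y x = q * real k * (d N + real (N-k))"
      using xy k unfolding q_def r_sym by (simp add: incl_rate_def zeta_def)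
    have T: "?T = q * real (N-k) * (d N + real k) + q * real k * (d N + real (N-k)) + c k"
      unfolding incl_total_rate_def sum_pairs[OF xy] ra rb c_def Oth_def by simp
    have Tpos: "?T > 0" unfolding T using ec[OF k] r_pos d0 d_pos[of N] k unfolding q_def
      by (intro add_pos_nonneg add_nonneg_nonneg mult_pos_pos mult_nonneg_nonneg) auto
    have harm: "hp ?z = (\<Sum>u\<in>UNIV. \<Sum>v\<in>UNIV. incl_rate d r N ?z u v / ?T * hp (move u v ?z))"
      unfolding hp_def by (rule hit_harm[where r=r and d=d and N=N, OF r_nonneg d0])
         (use zeta_notin[OF xy k] in \<open>simp add: C_def\<close>)
    have "?T * hp ?z = (\<Sum>u\<in>UNIV. \<Sum>v\<in>UNIV. incl_rate d r N ?z u v * hp (move u v ?z))"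
      unfolding harm sum_distrib_left using Tpos by (intro sum.cong refl) (simp add: field_simps)
    also have "\<dots> = q * real (N-k) * (d N + real k) * h (k+1) + q * real k * (d N + real (N-k)) * h (k-1) + e k"
      unfolding sum_pairs[OF xy] ra rb e_def Oth_def h_def move_xy[OF xy k(2)] move_yx[OF xy k(1) less_imp_le[OF k(2)]]
      by simp
    finally show ?thesis unfolding T h_def .
  qed
  have main: "\<bar>h 1 - real (N-1) / real N * h 0 - 1 / real N * h N\<bar> \<le> (2*(K+q)/q + 2) * d N * (harm N + 1)"
    by (rule discrete[OF N2 d_pos _ K0 hb ec cK heq]) (use r_pos q_def in auto)
  show ?thesis using main unfolding h_def E0 zeta_0 zeta_N[OF xy] K_def q_def .
qed



lemma harm_le_ln: "N \<ge> 1 \<Longrightarrow> harm N \<le> 1 + ln (real N)"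
proof -
  assume "N \<ge> 1"
  then obtain n where n: "N = Suc n" by (cases N) auto
  have "harm (Suc n) - ln (real (Suc n)) \<le> harm (Suc 0) - ln (real (Suc 0))"
    using decseq_harm_diff_ln unfolding decseq_def by (metis le0)
  then show ?thesis unfolding n by (simp add: harm_def)
qed

lemma ln_ge1: "N \<ge> 3 \<Longrightarrow> 1 \<le> ln (real N)"
proof -
  assume N: "N \<ge> 3"
  have "exp 1 \<le> real N" using exp_le N by linarith
  then have "ln (exp 1) \<le> ln (real N)" by (intro ln_mono) auto
  then show ?thesis by simp
qed

theorem lemma4p10:
  fixes r :: "'s::finite \<Rightarrow> 's \<Rightarrow> real" and d :: "nat \<Rightarrow> real"
    and A :: "'s set" and w x y :: 's
  assumes r_nonneg: "\<And>a b. r a b \<ge> 0"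
    and r_diag: "\<And>a. r a a = 0"
    and r_irred: "\<And>a b. (a, b) \<in> {(u, v). r u v > 0}\<^sup>*"
    and d_pos: "\<And>N. d N > 0"
    and d_lim: "d \<longlonglongrightarrow> 0"
    and wA: "w \<in> A"
    and xy: "x \<noteq> y" and r_sym: "r x y = r y x" and r_pos: "r x y > 0"
  shows "(\<lambda>N. \<bar>E0_prob d r N A w (zeta N 1 x y)
                 - real (N - 1) / real N * E0_prob d r N A w (xi N x)
                 - 1 / real N * E0_prob d r N A w (xi N y)\<bar>)
         \<in> O(\<lambda>N. d N * ln (real N))"
proof -
  define C where "C = 2 * ((\<Sum>p\<in>UNIV. r (fst p) (snd p)) + r x y) / r x y + 2"
  have S0: "(\<Sum>p\<in>UNIV. r (fst p) (snd p)) \<ge> 0" using r_nonneg by (intro sum_nonneg) auto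
  have C0: "C \<ge> 0" unfolding C_def using r_pos S0 by (intro add_nonneg_nonneg divide_nonneg_nonneg) auto
  show ?thesis
  proof (rule bigoI[where c = "3 * C"], rule eventually_sequentiallyI[of 3])
    fix N :: nat assume N: "N \<ge> 3"
    have lnN: "1 \<le> ln (real N)" by (rule ln_ge1[OF N])
    have b: "\<bar>E0_prob d r N A w (zeta N 1 x y)
                 - real (N - 1) / real N * E0_prob d r N A w (xi N x)
                 - 1 / real N * E0_prob d r N A w (xi N y)\<bar> \<le> C * d N * (harm N + 1)"
      unfolding C_def by (rule main_bound[OF r_nonneg d_pos xy r_sym r_pos]) (use N in simp)
    have "harm N + 1 \<le> 3 * ln (real N)" using harm_le_ln[of N] N lnN by simp
    then have "C * d N * (harm N + 1) \<le> C * d N * (3 * ln (real N))"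
      using C0 d_pos[of N] by (intro mult_left_mono) auto
    also have "\<dots> = 3 * C * norm (d N * ln (real N))"
      using d_pos[of N] lnN by (simp add: abs_mult)
    finally show "norm \<bar>E0_prob d r N A w (zeta N 1 x y)
                 - real (N - 1) / real N * E0_prob d r N A w (xi N x)
                 - 1 / real N * E0_prob d r N A w (xi N y)\<bar> \<le> 3 * C * norm (d N * ln (real N))"
      using b by simp
  qed
qed

end
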